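(* For each $0<c<1/2$ the equation $$-jcK\!\left(\tfrac{(c^2-1)(1-j^2)}{c^2}\right)+\tfrac{j}{c}\Pi\!\left(\tfrac{c^2-1}{c^2},\tfrac{(c^2-1)(1-j^2)}{c^2}\right)=\tfrac{\pi}{4}$$ has exactly one solution $j\in[0,1]$.
   Context: For $k,n<1$: $K(k)=\int_0^{\pi/2}(1-k\sin^2\theta)^{-1/2}d\theta$ and $\Pi(n,k)=\int_0^{\pi/2}\frac{d\theta}{(1-n\sin^2\theta)\sqrt{1-k\sin^2\theta}}$. *)

theory Defs
  imports "HOL-Analysis.Analysis"
begin

text \<open>Complete elliptic integrals in the parameter convention of the paper (for k, n < 1).\<close>

definition ellK :: "real \<Rightarrow> real" where
  "ellK k = integral {0..pi/2} (\<lambda>\<theta>. 1 / sqrt (1 - k * (sin \<theta>)^2))"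

definition ellPi :: "real \<Rightarrow> real \<Rightarrow> real" where
  "ellPi n k = integral {0..pi/2}
     (\<lambda>\<theta>. 1 / ((1 - n * (sin \<theta>)^2) * sqrt (1 - k * (sin \<theta>)^2)))"

end

theory Submission
  imports Defs
begin

definition hh :: "real \<Rightarrow> real \<Rightarrow> real \<Rightarrow> real" where
 "hh c j t = j * c * (1 - c^2) * (cos t)^2 /
    ((c^2 + (1-c^2)*(sin t)^2) * sqrt (1 - ((c^2-1)*(1-j^2)/c^2) * (sin t)^2))"

lemma D_pos: "0 < c \<Longrightarrow> c < 1 \<Longrightarrow> 0 < c^2 + (1-c^2)*(sin t)^2" for c :: real
proof -
  assume a: "0 < c" "c < 1"
  have "c^2 < 1" using a by (simp add: power_less_one_iff)
  then have "0 \<le> (1-c^2)*(sin t)^2" by simp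
  moreover have "0 < c^2" using a by simp
  ultimately show ?thesis by linarith
qed

lemma S_ge1: "0 < c \<Longrightarrow> c < 1 \<Longrightarrow> 0 \<le> j \<Longrightarrow> j \<le> 1 \<Longrightarrow>
   1 \<le> 1 - ((c^2-1)*(1-j^2)/c^2) * (sin t)^2" for c j :: real
proof -
  assume a: "0 < c" "c < 1" "0 \<le> j" "j \<le> 1"
  have "c^2 < 1" using a by (simp add: power_less_one_iff)
  moreover have "j^2 \<le> 1" using a by (simp add: power_le_one)
  ultimately have "(c^2-1)*(1-j^2)/c^2 \<le> 0"
    by (intro divide_nonpos_pos mult_nonpos_nonneg) (use a in auto)
  then have "((c^2-1)*(1-j^2)/c^2) * (sin t)^2 \<le> 0"
    by (rule mult_nonpos_nonneg) simp_all
  then show ?thesis by linarith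
qed

lemma pointwise:
  fixes c j t :: real
  assumes "0 < c" "c < 1" "0 \<le> j" "j \<le> 1"
  shows "- j * c * (1 / sqrt (1 - ((c^2 - 1) * (1 - j^2) / c^2) * (sin t)^2))
    + (j / c) * (1 / ((1 - ((c^2 - 1) / c^2) * (sin t)^2) * sqrt (1 - ((c^2 - 1) * (1 - j^2) / c^2) * (sin t)^2)))
    = hh c j t"
proof -
  define S where "S = sqrt (1 - ((c^2 - 1) * (1 - j^2) / c^2) * (sin t)^2)"
  define D where "D = c^2 + (1-c^2)*(sin t)^2"
  have S: "S > 0" unfolding S_def using S_ge1[OF assms, of t]
    by (intro real_sqrt_gt_zero) linarith
  have D: "D > 0" unfolding D_def using D_pos assms by simp
  have e: "1 - ((c^2 - 1) / c^2) * (sin t)^2 = D / c^2"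
    unfolding D_def using assms by (simp add: field_simps)
  have cs: "(cos t)^2 = 1 - (sin t)^2" by (simp add: cos_squared_eq)
  have oneD: "1 - D = (1-c^2)*(cos t)^2" unfolding D_def cs by (simp add: algebra_simps)
  have "- j * c * (1 / S) + (j / c) * (1 / ((D / c^2) * S)) = j*c*(1 - D) / (D * S)"
    using S D assms by (simp add: field_simps power2_eq_square)
  also have "\<dots> = j*c*((1-c^2)*(cos t)^2) / (D * S)" by (simp only: oneD)
  also have "\<dots> = hh c j t" unfolding hh_def D_def S_def by (simp only: mult.assoc)
  finally show ?thesis unfolding S_def e .
qed

lemma hh_cont:
  fixes c :: real
  assumes "0 < c" "c < 1"
  shows "continuous_on ({0..1} \<times> {0..pi/2}) (\<lambda>(j,t). hh c j t)"
proof -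
  have nz: "(c^2 + (1-c^2)*(sin t)^2) * sqrt (1 - ((c^2-1)*(1-j^2)/c^2) * (sin t)^2) \<noteq> 0"
    if "0 \<le> j" "j \<le> 1" for j t
  proof -
    have D: "0 < c^2 + (1-c^2)*(sin t)^2" using D_pos assms by simp
    have "1 \<le> 1 - ((c^2-1)*(1-j^2)/c^2) * (sin t)^2"
      using S_ge1[OF assms that, of t] by auto
    then have "0 < sqrt (1 - ((c^2-1)*(1-j^2)/c^2) * (sin t)^2)" by simp
    from mult_pos_pos[OF D this] show ?thesis by linarith
  qed
  show ?thesis unfolding hh_def case_prod_beta
    apply (intro continuous_intros)
    using assms apply simp
    apply (intro ballI nz)
     apply auto
    done
qed

lemma hh_cont1:
  fixes c :: real
  assumes "0 < c" "c < 1" "0 \<le> j" "j \<le> 1"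
  shows "continuous_on {0..pi/2} (hh c j)"
proof -
  have "continuous_on {0..pi/2} ((\<lambda>(j,t). hh c j t) \<circ> (\<lambda>t. (j,t)))"
    by (rule continuous_on_compose[OF _ continuous_on_subset[OF hh_cont[OF assms(1,2)]]])
       (use assms in \<open>auto intro!: continuous_intros\<close>)
  then show ?thesis by (simp add: o_def)
qed

lemma F_eq:
  fixes c j :: real
  assumes "0 < c" "c < 1" "0 \<le> j" "j \<le> 1"
  shows "- j * c * ellK ((c^2 - 1) * (1 - j^2) / c^2)
    + (j / c) * ellPi ((c^2 - 1) / c^2) ((c^2 - 1) * (1 - j^2) / c^2) = integral {0..pi/2} (hh c j)"
proof -
  define f1 where "f1 = (\<lambda>t. 1 / sqrt (1 - ((c^2 - 1) * (1 - j^2) / c^2) * (sin t)^2))"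
  define f2 where "f2 = (\<lambda>t. 1 / ((1 - ((c^2 - 1) / c^2) * (sin t)^2) * sqrt (1 - ((c^2 - 1) * (1 - j^2) / c^2) * (sin t)^2)))"
  have Sp: "0 < sqrt (1 - ((c^2 - 1) * (1 - j^2) / c^2) * (sin t)^2)" for t
    using S_ge1[OF assms, of t] by (intro real_sqrt_gt_zero) linarith
  have Ap: "0 < 1 - ((c^2 - 1) / c^2) * (sin t)^2" for t
  proof -
    have "1 - ((c^2 - 1) / c^2) * (sin t)^2 = (c^2 + (1-c^2)*(sin t)^2) / c^2"
      using assms by (simp add: field_simps)
    then show ?thesis using D_pos[OF assms(1,2), of t] assms by simp
  qed
  have i1: "f1 integrable_on {0..pi/2}" unfolding f1_def
    by (rule integrable_continuous_interval, intro continuous_intros) (use Sp in \<open>auto simp: less_le\<close>)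
  have i2: "f2 integrable_on {0..pi/2}" unfolding f2_def
    by (rule integrable_continuous_interval, intro continuous_intros) (use Sp Ap in \<open>auto simp: less_le\<close>)
  have "- j * c * ellK ((c^2 - 1) * (1 - j^2) / c^2)
    + (j / c) * ellPi ((c^2 - 1) / c^2) ((c^2 - 1) * (1 - j^2) / c^2)
    = integral {0..pi/2} (\<lambda>t. (- j * c) * f1 t) + integral {0..pi/2} (\<lambda>t. (j / c) * f2 t)"
    by (simp only: integral_mult_right ellK_def ellPi_def f1_def f2_def)
  also have "\<dots> = integral {0..pi/2} (\<lambda>t. (- j * c) * f1 t + (j / c) * f2 t)"
    by (rule integral_add[symmetric]; rule integrable_on_mult_right) (fact i1, fact i2)
  also have "\<dots> = integral {0..pi/2} (hh c j)"
    by (rule integral_cong) (use pointwise[OF assms] in \<open>simp add: f1_def f2_def\<close>)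
  finally show ?thesis .
qed

lemma hh_mono:
  fixes c j1 j2 t :: real
  assumes c: "0 < c" "c < 1" and j: "0 \<le> j1" "j1 < j2" "j2 \<le> 1" and t: "0 < t" "t < pi/2"
  shows "hh c j1 t < hh c j2 t"
proof -
  define S1 where "S1 = sqrt (1 - ((c^2-1)*(1-j1^2)/c^2) * (sin t)^2)"
  define S2 where "S2 = sqrt (1 - ((c^2-1)*(1-j2^2)/c^2) * (sin t)^2)"
  define D where "D = c^2 + (1-c^2)*(sin t)^2"
  define Q where "Q = c * (1 - c^2) * (cos t)^2"
  have S2p: "0 < S2" unfolding S2_def using S_ge1[OF c, of j2 t] j
    by (intro real_sqrt_gt_zero) linarith
  have S1p: "0 < S1" unfolding S1_def using S_ge1[OF c, of j1 t] j
    by (intro real_sqrt_gt_zero) linarith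
  have c2: "c^2 - 1 < 0" using c by (simp add: power_less_one_iff)
  have "j1^2 \<le> j2^2" using j by (intro power_mono) auto
  then have "(c^2-1)*(1-j1^2) \<le> (c^2-1)*(1-j2^2)" using c2
    by (intro mult_left_mono_neg) auto
  then have "(c^2-1)*(1-j1^2)/c^2 \<le> (c^2-1)*(1-j2^2)/c^2"
    using c by (intro divide_right_mono) auto
  then have "((c^2-1)*(1-j1^2)/c^2) * (sin t)^2 \<le> ((c^2-1)*(1-j2^2)/c^2) * (sin t)^2"
    by (intro mult_right_mono) auto
  then have "S2 \<le> S1" unfolding S1_def S2_def by (intro real_sqrt_le_mono) linarith
  then have "j1 / S1 \<le> j1 / S2" using S2p j by (intro divide_left_mono) auto
  also have "\<dots> < j2 / S2" using S2p j by (intro divide_strict_right_mono) auto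
  finally have lt: "j1 / S1 < j2 / S2" .
  have "0 < cos t" using t by (intro cos_gt_zero_pi) auto
  then have Qp: "0 < Q" unfolding Q_def using c by (simp add: power_less_one_iff)
  have Dp: "0 < D" unfolding D_def using D_pos c by simp
  have e1: "hh c j1 t = (j1 / S1) * (Q / D)" unfolding hh_def S1_def Q_def D_def by (simp add: mult_ac)
  have e2: "hh c j2 t = (j2 / S2) * (Q / D)" unfolding hh_def S2_def Q_def D_def by (simp add: mult_ac)
  show ?thesis unfolding e1 e2 using lt Qp Dp by (intro mult_strict_right_mono) auto
qed

lemma int_piece1:
  fixes c :: real assumes c: "0 < c"
  shows "((\<lambda>t. c / (c^2 * (cos t)^2 + (sin t)^2)) has_integral arctan (1/c)) {0..pi/4}"
proof -
  have "((\<lambda>t. c / (c^2 * (cos t)^2 + (sin t)^2)) has_integral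
        (arctan (sin (pi/4) / (c * cos (pi/4))) - arctan (sin 0 / (c * cos 0)))) {0..pi/4}"
  proof (rule fundamental_theorem_of_calculus)
    fix x assume x: "x \<in> {0..pi/4}"
    have x1: "0 \<le> x" "x \<le> pi/4" using x by auto
    have cx: "0 < cos x" using x1 pi_gt_zero by (intro cos_gt_zero_pi) linarith+
    have "((\<lambda>t. arctan (sin t / (c * cos t))) has_real_derivative
          c / (c^2 * (cos x)^2 + (sin x)^2)) (at x)"
    proof (rule derivative_eq_intros refl)+
      show "c * cos x \<noteq> 0" using c cx by simp
      have ne: "c^2 * (cos x)^2 + (sin x)^2 \<noteq> 0" using c cx by (smt (verit) zero_le_power2 mult_pos_pos zero_less_power)
      have h1: "1 + (sin x / (c * cos x))^2 = (c^2 * (cos x)^2 + (sin x)^2) / (c * cos x)^2"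
        using c cx by (simp add: field_simps power2_eq_square)
      have "cos x * (c * cos x) - sin x * (c * - sin x) = c * (cos x * cos x + sin x * sin x)"
        by (simp add: algebra_simps del: sin_cos_squared_add3)
      then have h2: "cos x * (c * cos x) - sin x * (c * - sin x) = c" by simp
      show "inverse (1 + (sin x / (c * cos x))\<^sup>2) *
        ((cos x * (c * cos x) - sin x * (c * - sin x)) / (c * cos x * (c * cos x))) =
        c / (c\<^sup>2 * (cos x)\<^sup>2 + (sin x)\<^sup>2)"
        unfolding h1 h2 using c cx ne by (simp add: field_simps power2_eq_square)
    qed simp
    then show "((\<lambda>t. arctan (sin t / (c * cos t))) has_vector_derivative
          c / (c^2 * (cos x)^2 + (sin x)^2)) (at x within {0..pi/4})"
      by (simp add: has_real_derivative_iff_has_vector_derivative[symmetric] has_field_derivative_at_within)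
  qed (use pi_gt_zero in simp)
  moreover have "arctan (sin (pi/4) / (c * cos (pi/4))) - arctan (sin 0 / (c * cos 0)) = arctan (1/c)"
    using c by (simp add: sin_45 cos_45)
  ultimately show ?thesis by simp
qed

lemma int_piece2:
  fixes c :: real assumes c: "0 < c"
  shows "((\<lambda>t. c / (c^2 * (cos t)^2 + (sin t)^2)) has_integral arctan c) {pi/4..pi/2}"
proof -
  have "((\<lambda>t. c / (c^2 * (cos t)^2 + (sin t)^2)) has_integral
        ((- arctan (c * cos (pi/2) / sin (pi/2))) - (- arctan (c * cos (pi/4) / sin (pi/4))))) {pi/4..pi/2}"
  proof (rule fundamental_theorem_of_calculus)
    fix x assume x: "x \<in> {pi/4..pi/2}"
    have x1: "pi/4 \<le> x" "x \<le> pi/2" using x by auto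
    have sx: "0 < sin x" using x1 pi_gt_zero by (intro sin_gt_zero) linarith+
    have "((\<lambda>t. - arctan (c * cos t / sin t)) has_real_derivative
          c / (c^2 * (cos x)^2 + (sin x)^2)) (at x)"
      apply (rule derivative_eq_intros refl)+
      subgoal using sx by simp
      apply (rule refl)
      apply (rule refl)
    proof -
      have ne: "c^2 * (cos x)^2 + (sin x)^2 \<noteq> 0" using c sx by (smt (verit) zero_le_power2 mult_nonneg_nonneg zero_less_power)
      have h1: "1 + (c * cos x / sin x)^2 = (c^2 * (cos x)^2 + (sin x)^2) / (sin x)^2"
        using c sx by (simp add: field_simps power2_eq_square)
      have "(0 * cos x + - sin x * 1 * c) * sin x - c * cos x * (cos x * 1) = - c * (cos x * cos x + sin x * sin x)"
        by (simp add: algebra_simps del: sin_cos_squared_add3)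
      then have h2: "(0 * cos x + - sin x * 1 * c) * sin x - c * cos x * (cos x * 1) = - c" by simp
      show "- (inverse (1 + (c * cos x / sin x)\<^sup>2) *
        (((0 * cos x + - sin x * 1 * c) * sin x - c * cos x * (cos x * 1)) / (sin x * sin x))) =
        c / (c\<^sup>2 * (cos x)\<^sup>2 + (sin x)\<^sup>2)"
        unfolding h1 h2 using c sx ne by (simp add: field_simps power2_eq_square)
    qed
    then show "((\<lambda>t. - arctan (c * cos t / sin t)) has_vector_derivative
          c / (c^2 * (cos x)^2 + (sin x)^2)) (at x within {pi/4..pi/2})"
      by (simp add: has_real_derivative_iff_has_vector_derivative[symmetric] has_field_derivative_at_within)
  qed (use pi_gt_zero in simp)
  moreover have "(- arctan (c * cos (pi/2) / sin (pi/2))) - (- arctan (c * cos (pi/4) / sin (pi/4))) = arctan c"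
    using c by (simp add: sin_45 cos_45)
  ultimately show ?thesis by simp
qed

lemma F1:
  fixes c :: real assumes c: "0 < c" "c < 1"
  shows "integral {0..pi/2} (hh c 1) = pi/2 * (1 - c)"
proof -
  let ?g = "\<lambda>t. c / (c^2 * (cos t)^2 + (sin t)^2)"
  have "(?g has_integral (arctan (1/c) + arctan c)) {0..pi/2}"
    by (rule has_integral_combine[OF _ _ int_piece1[OF c(1)] int_piece2[OF c(1)]])
       (use pi_gt_zero in auto)
  moreover have "arctan (1/c) + arctan c = pi/2" using arctan_inverse[of c] c by (simp add: inverse_eq_divide)
  ultimately have g: "(?g has_integral pi/2) {0..pi/2}" by simp
  have k: "((\<lambda>t. c) has_integral (pi/2 * c)) {0..pi/2}"
    using has_integral_const_real[of c 0 "pi/2"] pi_gt_zero by simp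
  have "((\<lambda>t. ?g t - c) has_integral (pi/2 - pi/2 * c)) {0..pi/2}"
    by (rule has_integral_diff[OF g k])
  moreover have "?g t - c = hh c 1 t" for t
  proof -
    define E where "E = c^2 * (cos t)^2 + (sin t)^2"
    have Ep: "0 < E" unfolding E_def using D_pos[OF c, of t]
      by (simp add: cos_squared_eq algebra_simps)
    have E2: "c^2 + (1-c^2)*(sin t)^2 = E" unfolding E_def
      by (simp add: cos_squared_eq algebra_simps)
    have num: "c * (1 - c^2) * (cos t)^2 = c - c * E" unfolding E_def
      by (simp add: sin_squared_eq algebra_simps)
    have "hh c 1 t = c * (1 - c^2) * (cos t)^2 / E" unfolding hh_def E2[symmetric] by simp
    also have "\<dots> = (c - c * E) / E" by (simp only: num)
    also have "\<dots> = ?g t - c" unfolding E_def[symmetric] using Ep by (simp add: field_simps)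
    finally show ?thesis by simp
  qed
  ultimately have "(hh c 1 has_integral (pi/2 - pi/2 * c)) {0..pi/2}" by simp
  then show ?thesis by (simp add: integral_unique algebra_simps)
qed

theorem mainTheorem8:
  fixes c :: real
  assumes "0 < c" and "c < 1/2"
  shows "\<exists>!j. j \<in> {0..1} \<and>
    - j * c * ellK ((c^2 - 1) * (1 - j^2) / c^2)
    + (j / c) * ellPi ((c^2 - 1) / c^2) ((c^2 - 1) * (1 - j^2) / c^2) = pi / 4"
proof -
  have c: "0 < c" "c < 1" using assms by auto
  define F where "F = (\<lambda>j. integral {0..pi/2} (hh c j))"
  have eq: "- j * c * ellK ((c^2 - 1) * (1 - j^2) / c^2)
    + (j / c) * ellPi ((c^2 - 1) / c^2) ((c^2 - 1) * (1 - j^2) / c^2) = F j" if "j \<in> {0..1}" for j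
    unfolding F_def using F_eq[OF c] that by auto
  have cont: "continuous_on {0..1} F"
  proof -
    have "continuous_on {0..1} (\<lambda>j. integral (cbox 0 (pi/2)) (hh c j))"
      by (rule integral_continuous_on_param) (use hh_cont[OF c] in \<open>simp add: cbox_interval\<close>)
    then show ?thesis unfolding F_def by (simp add: cbox_interval)
  qed
  have F0: "F 0 = 0" unfolding F_def hh_def by simp
  have F1': "F 1 = pi/2 * (1 - c)" unfolding F_def by (rule F1[OF c])
  have "pi/4 \<le> F 1" unfolding F1' using assms pi_gt_zero by (simp add: field_simps)
  moreover have "F 0 \<le> pi/4" using F0 pi_gt_zero by simp
  ultimately obtain j where j: "0 \<le> j" "j \<le> 1" "F j = pi/4"
    using IVT'[of F 0 "pi/4" 1] cont by auto
  have mono: "F j1 < F j2" if "0 \<le> j1" "j1 < j2" "j2 \<le> 1" for j1 j2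
    unfolding F_def
  proof (rule integral_less_real)
    show "continuous_on {0..pi/2} (hh c j1)" using hh_cont1[OF c] that by auto
    show "continuous_on {0..pi/2} (hh c j2)" using hh_cont1[OF c] that by auto
    have p: "0 < pi" by (rule pi_gt_zero)
    show "{0<..<pi/2} \<noteq> {}" using p by (simp add: not_le)
    show "hh c j1 t < hh c j2 t" if "t \<in> {0<..<pi/2}" for t
      using hh_mono[OF c \<open>0 \<le> j1\<close> \<open>j1 < j2\<close> \<open>j2 \<le> 1\<close>] that by auto
  qed
  show ?thesis
  proof (rule ex1I[of _ j])
    show "j \<in> {0..1} \<and> - j * c * ellK ((c^2 - 1) * (1 - j^2) / c^2)
      + (j / c) * ellPi ((c^2 - 1) / c^2) ((c^2 - 1) * (1 - j^2) / c^2) = pi / 4"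
      using eq[of j] j by auto
  next
    fix y assume y: "y \<in> {0..1} \<and> - y * c * ellK ((c^2 - 1) * (1 - y^2) / c^2)
      + (y / c) * ellPi ((c^2 - 1) / c^2) ((c^2 - 1) * (1 - y^2) / c^2) = pi / 4"
    then have yin: "y \<in> {0..1}" and hy: "- y * c * ellK ((c^2 - 1) * (1 - y^2) / c^2)
      + (y / c) * ellPi ((c^2 - 1) / c^2) ((c^2 - 1) * (1 - y^2) / c^2) = pi / 4" by auto
    have Fy: "F y = pi/4" "0 \<le> y" "y \<le> 1" using hy yin unfolding eq[OF yin] by auto
    show "y = j"
    proof (rule ccontr)
      assume "y \<noteq> j"
      then consider "y < j" | "j < y" by linarith
      then show False
      proof cases
        case 1 then show False using mono[of y j] Fy j by auto
      next
        case 2 then show False using mono[of j y] Fy j by auto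
      qed
    qed
  qed
qed

end
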